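(* Let $\mathbf{x}$ be a parking function of length $n$. Then the mixed graph $P(\mathbf{x})$ produced by Algorithm A is a parking graph on $[n]$, and for each vertex $i$ the number of directed edges (up or down) of $P(\mathbf{x})$ pointing into $i$ equals $x_i-1$.
   Context: A parking function of length $n$ is a sequence of positive integers which, sorted increasingly as $x_{(1)}\le\dots\le x_{(n)}$, satisfies $x_{(k)}\le k$ for all $k$. A parking graph $P$ on $[n]$ is a mixed graph with vertex set $[n]$ in which every pair $\{j,k\}$ with $1\le j<k\le n$ is joined by exactly one edge: a down edge $j\leftarrow k$ (directed from $k$ to $j$), an up edge $j\rightarrow k$ (directed from $j$ to $k$), or a downish (undirected) edge $jk$; letting $\vec P$ be obtained by replacing each downish $jk$ ($j<k$) with $j\leftarrow k$, $P$ must satisfy: (i) $\vec P$ is acyclic, and (ii) for every triangle of $P$ having at least one down edge and at least one downish edge, the source (in-degree $0$ within the triangle in $\vec P$) and sink (out-degree $0$ within the triangle in $\vec P$) are not joined by a downish edge. Algorithm A: Input $\mathbf{x}$; start with vertex set $[n]$ and no edges; set $\mathbf{y}:=\mathbf{x}-(1,\dots,1)$. Repeat: (Up step) If some $y_k=0$: let $j:=\max\{k: y_k=0\}$; for every $k>j$ with $y_k>0$, introduce the up edge $j\rightarrow k$ and replace $y_k$ by $y_k-1$; replace every entry that was negative at the start of this step by that entry minus $1$; set $y_j:=-1$; repeat. (Down step) Else, if some $y_k>0$: among all indices $j$ such that there is $k<j$ with $y_k>0$ and the edge $k\leftarrow j$ not yet introduced, choose $j$ with minimal $y_j$; for every $k<j$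 with $y_k>0$, introduce the down edge $k\leftarrow j$ and replace $y_k$ by $y_k-1$; repeat. (Stop) Else (all $y_k<0$): join every pair not yet joined by a downish edge and stop. Output: the mixed graph $P(\mathbf{x})$. *)

theory Defs
  imports Main
begin

text \<open>A sequence x_1..x_n is the list x with x_i = x ! (i - 1).\<close>
definition parking_function :: "nat list \<Rightarrow> bool" where
  "parking_function x \<longleftrightarrow>
     (\<forall>v\<in>set x. v \<ge> 1) \<and> (\<forall>k<length x. sort x ! k \<le> k + 1)"

text \<open>All edges are stored as pairs (j,k) with j < k:
  (j,k) in up: up edge j -> k;  (j,k) in down: down edge j <- k (directed from k to j);
  (j,k) in downish: undirected downish edge jk.\<close>
record mgraph =
  up :: "(nat \<times> nat) set"
  down :: "(nat \<times> nat) set"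
  downish :: "(nat \<times> nat) set"

definition vpairs :: "nat \<Rightarrow> (nat \<times> nat) set" where
  "vpairs n = {(j, k). 1 \<le> j \<and> j < k \<and> k \<le> n}"

definition mixed_graph :: "nat \<Rightarrow> mgraph \<Rightarrow> bool" where
  "mixed_graph n P \<longleftrightarrow>
     up P \<subseteq> vpairs n \<and> down P \<subseteq> vpairs n \<and> downish P \<subseteq> vpairs n \<and>
     up P \<inter> down P = {} \<and> up P \<inter> downish P = {} \<and> down P \<inter> downish P = {} \<and>
     up P \<union> down P \<union> downish P = vpairs n"

text \<open>Arcs (from, to) of the directed graph vec P (downish jk replaced by j <- k).\<close>
definition arcs :: "mgraph \<Rightarrow> (nat \<times> nat) set" where
  "arcs P = up P \<union> {(k, j). (j, k) \<in> down P} \<union> {(k, j). (j, k) \<in> downish P}"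

definition is_down :: "mgraph \<Rightarrow> nat \<Rightarrow> nat \<Rightarrow> bool" where
  "is_down P a b \<longleftrightarrow> (min a b, max a b) \<in> down P"

definition is_downish :: "mgraph \<Rightarrow> nat \<Rightarrow> nat \<Rightarrow> bool" where
  "is_downish P a b \<longleftrightarrow> (min a b, max a b) \<in> downish P"

definition parking_graph :: "nat \<Rightarrow> mgraph \<Rightarrow> bool" where
  "parking_graph n P \<longleftrightarrow>
     mixed_graph n P \<and>
     acyclic (arcs P) \<and>
     (\<forall>s t m. s \<in> {1..n} \<and> t \<in> {1..n} \<and> m \<in> {1..n} \<and> distinct [s, t, m] \<and>
        (is_down P s t \<or> is_down P t m \<or> is_down P s m) \<and>
        (is_downish P s t \<or> is_downish P t m \<or> is_downish P s m) \<and>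
        (t, s) \<notin> arcs P \<and> (m, s) \<notin> arcs P \<and>  \<comment> \<open>s is the source\<close>
        (t, m) \<notin> arcs P  \<comment> \<open>t is the sink (together with (t,s) not an arc)\<close>
        \<longrightarrow> \<not> is_downish P s t)"

text \<open>State: (y, introduced up edges, introduced down edges). The down step allows any
  choice among the indices attaining the minimal y_j (ties broken arbitrarily).\<close>
type_synonym algA_state = "(nat \<Rightarrow> int) \<times> (nat \<times> nat) set \<times> (nat \<times> nat) set"

definition down_cands :: "nat \<Rightarrow> (nat \<Rightarrow> int) \<Rightarrow> (nat \<times> nat) set \<Rightarrow> nat set" where
  "down_cands n y D = {j \<in> {1..n}. \<exists>k. 1 \<le> k \<and> k < j \<and> 0 < y k \<and> (k, j) \<notin> D}"

inductive algA_step :: "nat \<Rightarrow> algA_state \<Rightarrow> algA_state \<Rightarrow> bool" for n where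
  up_step: "\<lbrakk> j \<in> {1..n}; y j = 0; \<forall>k\<in>{1..n}. y k = 0 \<longrightarrow> k \<le> j \<rbrakk> \<Longrightarrow>
    algA_step n (y, U, D)
      ((\<lambda>k. if k = j then -1
             else if k \<in> {1..n} \<and> j < k \<and> 0 < y k then y k - 1
             else if k \<in> {1..n} \<and> y k < 0 then y k - 1
             else y k),
       U \<union> {(j, k) | k. j < k \<and> k \<le> n \<and> 0 < y k}, D)"
| down_step: "\<lbrakk> \<not> (\<exists>k\<in>{1..n}. y k = 0); \<exists>k\<in>{1..n}. 0 < y k;
      j \<in> down_cands n y D; \<forall>j'\<in>down_cands n y D. y j \<le> y j' \<rbrakk> \<Longrightarrow>
    algA_step n (y, U, D)
      ((\<lambda>k. if 1 \<le> k \<and> k < j \<and> 0 < y k then y k - 1 else y k),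
       U, D \<union> {(k, j) | k. 1 \<le> k \<and> k < j \<and> 0 < y k})"

definition algA_init :: "nat list \<Rightarrow> algA_state" where
  "algA_init x = ((\<lambda>k. if k \<in> {1..length x} then int (x ! (k - 1)) - 1 else -1), {}, {})"

definition algA_output :: "nat list \<Rightarrow> mgraph \<Rightarrow> bool" where
  "algA_output x P \<longleftrightarrow>
     (\<exists>y U D. (algA_step (length x))\<^sup>*\<^sup>* (algA_init x) (y, U, D) \<and>
        (\<forall>k\<in>{1..length x}. y k < 0) \<and>
        P = \<lparr>up = U, down = D, downish = vpairs (length x) - (U \<union> D)\<rparr>)"

definition indeg :: "mgraph \<Rightarrow> nat \<Rightarrow> nat" where
  "indeg P i = card {j. (j, i) \<in> up P} + card {k. (i, k) \<in> down P}"

end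

theory Submission
  imports Defs
begin


definition bef :: "(nat \<Rightarrow> int) \<Rightarrow> nat \<Rightarrow> nat \<Rightarrow> bool" where
  "bef y a b \<longleftrightarrow> y a < 0 \<and> (0 \<le> y b \<or> y a < y b)"

definition cnt :: "(nat \<times> nat) set \<Rightarrow> (nat \<times> nat) set \<Rightarrow> nat \<Rightarrow> int" where
  "cnt U D k = int (card {j. (j,k) \<in> U}) + int (card {j. (k,j) \<in> D})"

definition ainv :: "nat \<Rightarrow> (nat \<Rightarrow> int) \<Rightarrow> (nat \<Rightarrow> int) \<Rightarrow> (nat \<times> nat) set \<Rightarrow> (nat \<times> nat) set \<Rightarrow> bool" where
  "ainv n X y U D \<longleftrightarrow>
   (\<forall>v. v \<notin> {1..n} \<longrightarrow> y v = -1) \<and>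
   (\<forall>a\<in>{1..n}. \<forall>b\<in>{1..n}. y a < 0 \<longrightarrow> y a = y b \<longrightarrow> a = b) \<and>
   (\<forall>a b. (a,b)\<in>U \<longrightarrow> a<b \<and> a\<in>{1..n} \<and> b\<in>{1..n} \<and> bef y a b) \<and>
   (\<forall>k j. (k,j)\<in>D \<longrightarrow> k<j \<and> k\<in>{1..n} \<and> j\<in>{1..n} \<and> bef y j k) \<and>
   (\<forall>a\<in>{1..n}. \<forall>b\<in>{1..n}. a<b \<longrightarrow> bef y a b \<longrightarrow> (a,b)\<in>U) \<and>
   (\<forall>k\<in>{1..n}. (if 0 \<le> y k then y k + cnt U D k else cnt U D k) = X k - 1) \<and>
   (\<forall>k j k'. (k,j)\<in>D \<longrightarrow> k'\<in>{1..n} \<longrightarrow> k'<j \<longrightarrow> (k',j)\<in>D \<or> bef y k' k) \<and>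
   (\<forall>k j j'. (k,j)\<in>D \<longrightarrow> j'\<in>{1..n} \<longrightarrow> y j' < y j \<longrightarrow> k<j' \<longrightarrow> (k,j')\<in>D)"

definition PF :: "nat \<Rightarrow> (nat \<Rightarrow> int) \<Rightarrow> bool" where
  "PF n X \<longleftrightarrow> (\<forall>m<n. m + 1 \<le> card {i\<in>{1..n}. X i \<le> int (m+1)})"

lemma inv_out: "ainv n X y U D \<Longrightarrow> v \<notin> {1..n} \<Longrightarrow> y v = -1"
  unfolding ainv_def by blast
lemma inv_dist: "ainv n X y U D \<Longrightarrow> a\<in>{1..n} \<Longrightarrow> b\<in>{1..n} \<Longrightarrow> y a < 0 \<Longrightarrow> y a = y b \<Longrightarrow> a = b"
  unfolding ainv_def by blast
lemma inv_U: "ainv n X y U D \<Longrightarrow> (a,b)\<in>U \<Longrightarrow> a<b \<and> a\<in>{1..n} \<and> b\<in>{1..n} \<and> bef y a b"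
  unfolding ainv_def by blast
lemma inv_D: "ainv n X y U D \<Longrightarrow> (k,j)\<in>D \<Longrightarrow> k<j \<and> k\<in>{1..n} \<and> j\<in>{1..n} \<and> bef y j k"
  unfolding ainv_def by blast
lemma inv_I5: "ainv n X y U D \<Longrightarrow> a\<in>{1..n} \<Longrightarrow> b\<in>{1..n} \<Longrightarrow> a<b \<Longrightarrow> bef y a b \<Longrightarrow> (a,b)\<in>U"
  unfolding ainv_def by blast
lemma inv_cnt: "ainv n X y U D \<Longrightarrow> k\<in>{1..n} \<Longrightarrow> (if 0 \<le> y k then y k + cnt U D k else cnt U D k) = X k - 1"
  unfolding ainv_def by blast
lemma inv_J1: "ainv n X y U D \<Longrightarrow> (k,j)\<in>D \<Longrightarrow> k'\<in>{1..n} \<Longrightarrow> k'<j \<Longrightarrow> (k',j)\<in>D \<or> bef y k' k"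
  unfolding ainv_def by blast
lemma inv_J2: "ainv n X y U D \<Longrightarrow> (k,j)\<in>D \<Longrightarrow> j'\<in>{1..n} \<Longrightarrow> y j' < y j \<Longrightarrow> k<j' \<Longrightarrow> (k,j')\<in>D"
  unfolding ainv_def by blast

lemma fin_U: "ainv n X y U D \<Longrightarrow> finite {j. (j,k) \<in> U}"
  by (rule finite_subset[of _ "{1..n}"]) (auto dest: inv_U)

lemma fin_D: "ainv n X y U D \<Longrightarrow> finite {j. (k,j) \<in> D}"
  by (rule finite_subset[of _ "{1..n}"]) (auto dest: inv_D)

lemma key_neg:
  assumes inv: "ainv n X y U D" and pf: "PF n X"
    and nz: "\<not> (\<exists>k\<in>{1..n}. y k = 0)" and ex: "\<exists>k\<in>{1..n}. 0 < y k"
  shows "\<exists>j\<in>down_cands n y D. y j < 0"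
proof (rule ccontr)
  assume H: "\<not> (\<exists>j\<in>down_cands n y D. y j < 0)"
  define R where "R = {v\<in>{1..n}. y v < 0}"
  obtain k0 where k0: "k0 \<in> {1..n}" "0 < y k0" using ex by blast
  note i5 = inv_I5[OF inv] and i6 = inv_cnt[OF inv]
  have finR: "finite R" unfolding R_def by simp
  have big: "X k \<ge> int (card R) + 2" if k: "k \<in> {1..n} - R" for k
  proof -
    have n1: "\<not> y k < 0" using k unfolding R_def by auto
    have n2: "y k \<noteq> 0" using nz k by auto
    have ypos: "0 < y k" using n1 n2 by linarith
    have A: "{j\<in>R. j<k} \<subseteq> {j. (j,k) \<in> U}"
      using i5 k ypos unfolding R_def bef_def by force
    have B: "{j\<in>R. k<j} \<subseteq> {j. (k,j) \<in> D}"
    proof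
      fix j assume j: "j \<in> {j\<in>R. k<j}"
      show "j \<in> {j. (k,j) \<in> D}"
      proof (rule ccontr)
        assume "j \<notin> {j. (k,j) \<in> D}"
        then have "j \<in> down_cands n y D" using j k ypos unfolding down_cands_def R_def by auto
        then show False using H j unfolding R_def by auto
      qed
    qed
    have "R = {j\<in>R. j<k} \<union> {j\<in>R. k<j}" using k by (auto, metis linorder_neqE_nat)
    moreover have "card ({j\<in>R. j<k} \<union> {j\<in>R. k<j}) = card {j\<in>R. j<k} + card {j\<in>R. k<j}"
      by (rule card_Un_disjoint) (use finR in auto)
    ultimately have "card R = card {j\<in>R. j<k} + card {j\<in>R. k<j}" by simp
    also have "\<dots> \<le> card {j. (j,k) \<in> U} + card {j. (k,j) \<in> D}"
      using card_mono[OF fin_U[OF inv] A] card_mono[OF fin_D[OF inv] B] by simp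
    finally have "int (card R) \<le> cnt U D k" unfolding cnt_def by linarith
    moreover have "y k + cnt U D k = X k - 1" using i6[of k] k ypos by simp
    ultimately show ?thesis using ypos by linarith
  qed
  have "R \<subseteq> {1..n}" "k0 \<notin> R" using k0 unfolding R_def by auto
  then have "R \<subset> {1..n}" using k0(1) by blast
  then have rn: "card R < n" using psubset_card_mono[of "{1..n}" R] by simp
  then have c1: "card R + 1 \<le> card {i\<in>{1..n}. X i \<le> int (card R + 1)}" using pf unfolding PF_def by blast
  have "{i\<in>{1..n}. X i \<le> int (card R + 1)} \<subseteq> R"
  proof
    fix i assume i: "i \<in> {i\<in>{1..n}. X i \<le> int (card R + 1)}"
    show "i \<in> R"
    proof (rule ccontr)
      assume "i \<notin> R"
      then have "X i \<ge> int (card R) + 2" using big i by blast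
      then show False using i by simp
    qed
  qed
  then have "card {i\<in>{1..n}. X i \<le> int (card R + 1)} \<le> card R" using finR card_mono by blast
  then show False using c1 by simp
qed




lemma up_pres:
  assumes inv: "ainv n X y U D"
    and jN: "j\<in>{1..n}" and yj: "y j = 0" and jmax: "\<forall>k\<in>{1..n}. y k = 0 \<longrightarrow> k \<le> j"
  shows "ainv n X (\<lambda>k. if k = j then -1
             else if k \<in> {1..n} \<and> j < k \<and> 0 < y k then y k - 1
             else if k \<in> {1..n} \<and> y k < 0 then y k - 1
             else y k) (U \<union> {(j, k) | k. j < k \<and> k \<le> n \<and> 0 < y k}) D"
    (is "ainv n X ?y' ?U' D")
proof -
  define y' where "y' = ?y'"
  define U' where "U' = ?U'"
  have y'_out: "y' v = y v" if "v \<notin> {1..n}" for v using that jN unfolding y'_def by auto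
  have y'_j: "y' j = -1" unfolding y'_def by simp
  have neg_iff: "y' a < 0 \<longleftrightarrow> y a < 0" if "a \<in> {1..n}" "a \<noteq> j" for a
    using that unfolding y'_def by auto
  have neg_val: "y' a = y a - 1" if "a \<in> {1..n}" "y a < 0" for a
    using that yj unfolding y'_def by auto
  have nn: "0 \<le> y' a" if "a \<in> {1..n}" "a \<noteq> j" "0 \<le> y a" for a
    using that unfolding y'_def by auto
  have bef_pres: "bef y' a b" if ab: "a\<in>{1..n}" "b\<in>{1..n}" "bef y a b" for a b
  proof -
    have ya: "y a < 0" using ab(3) unfolding bef_def by simp
    then have a': "y' a = y a - 1" using neg_val ab(1) by simp
    show ?thesis
    proof (cases "b = j")
      case True then show ?thesis using a' ya y'_j unfolding bef_def by simp
    next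
      case False
      show ?thesis
      proof (cases "0 \<le> y b")
        case True then show ?thesis using nn[OF ab(2) False] a' ya unfolding bef_def by simp
      next
        case False
        then have "y' b = y b - 1" using neg_val ab(2) by simp
        then show ?thesis using a' ab(3) False unfolding bef_def by simp
      qed
    qed
  qed
  have bef_back: "bef y a b" if ab: "a\<in>{1..n}" "b\<in>{1..n}" "a \<noteq> j" "bef y' a b" for a b
  proof -
    have ya: "y a < 0" using ab(4) neg_iff[OF ab(1,3)] unfolding bef_def by simp
    then have a': "y' a = y a - 1" using neg_val ab(1) by simp
    show ?thesis
    proof (cases "b = j")
      case True then show ?thesis using ya yj unfolding bef_def by simp
    next
      case False
      show ?thesis
      proof (cases "0 \<le> y b")
        case True then show ?thesis using ya unfolding bef_def by simp
      next
        case False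
        then have "y' b = y b - 1" using neg_val ab(2) by simp
        then show ?thesis using a' ab(4) False ya unfolding bef_def by simp
      qed
    qed
  qed
  have h1: "\<forall>v. v \<notin> {1..n} \<longrightarrow> y' v = -1" using y'_out inv_out[OF inv] by simp
  have h2: "\<forall>a\<in>{1..n}. \<forall>b\<in>{1..n}. y' a < 0 \<longrightarrow> y' a = y' b \<longrightarrow> a = b"
  proof (intro ballI impI)
    fix a b assume a: "a\<in>{1..n}" and b: "b\<in>{1..n}" and "y' a < 0" "y' a = y' b"
    show "a = b"
    proof (cases "a = j")
      case True
      show ?thesis
      proof (rule ccontr)
        assume "a \<noteq> b"
        then have "b \<noteq> j" using True by simp
        then have "y b < 0" using neg_iff[OF b] \<open>y' a < 0\<close> \<open>y' a = y' b\<close> by simp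
        then show False using neg_val[OF b] y'_j True \<open>y' a = y' b\<close> by force
      qed
    next
      case False
      then have ya: "y a < 0" using neg_iff[OF a] \<open>y' a < 0\<close> by simp
      show ?thesis
      proof (cases "b = j")
        case True
        then have "y' b = -1" using y'_j by simp
        then have False using neg_val[OF a ya] \<open>y' a = y' b\<close> ya by linarith
        then show ?thesis ..
      next
        case False
        then have yb: "y b < 0" using neg_iff[OF b] \<open>y' a < 0\<close> \<open>y' a = y' b\<close> by simp
        have "y a = y b" using neg_val[OF a ya] neg_val[OF b yb] \<open>y' a = y' b\<close> by linarith
        then show ?thesis using inv_dist[OF inv a b ya] by blast
      qed
    qed
  qed
  have h3: "\<forall>a b. (a,b)\<in>U' \<longrightarrow> a<b \<and> a\<in>{1..n} \<and> b\<in>{1..n} \<and> bef y' a b"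
  proof (intro allI impI)
    fix a b assume "(a,b) \<in> U'"
    then consider "(a,b) \<in> U" | "a = j" "j < b" "b \<le> n" "0 < y b" unfolding U'_def by blast
    then show "a<b \<and> a\<in>{1..n} \<and> b\<in>{1..n} \<and> bef y' a b"
    proof cases
      case 1 then show ?thesis using inv_U[OF inv] bef_pres by blast
    next
      case 2
      have bN: "b \<in> {1..n}" using 2 jN by auto
      have "y' b = y b - 1" using 2 bN unfolding y'_def by auto
      then show ?thesis using 2 bN jN y'_j unfolding bef_def by simp
    qed
  qed
  have h4: "\<forall>k j. (k,j)\<in>D \<longrightarrow> k<j \<and> k\<in>{1..n} \<and> j\<in>{1..n} \<and> bef y' j k"
    using inv_D[OF inv] bef_pres by blast
  have h5: "\<forall>a\<in>{1..n}. \<forall>b\<in>{1..n}. a<b \<longrightarrow> bef y' a b \<longrightarrow> (a,b)\<in>U'"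
  proof (intro ballI impI)
    fix a b assume a: "a\<in>{1..n}" and b: "b\<in>{1..n}" and ab: "a<b" and bf: "bef y' a b"
    show "(a,b) \<in> U'"
    proof (cases "a = j")
      case True
      then have bj: "b \<noteq> j" using ab by simp
      have "0 \<le> y' b \<or> -1 < y' b" using bf True y'_j unfolding bef_def by simp
      then have "0 \<le> y' b" by linarith
      then have "0 \<le> y b" using neg_iff[OF b bj] by simp
      moreover have "y b \<noteq> 0" using jmax b ab True by auto
      ultimately show ?thesis using True ab b unfolding U'_def by auto
    next
      case False
      then show ?thesis using inv_I5[OF inv a b ab bef_back[OF a b False bf]] unfolding U'_def by simp
    qed
  qed
  have h6: "\<forall>k\<in>{1..n}. (if 0 \<le> y' k then y' k + cnt U' D k else cnt U' D k) = X k - 1"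
  proof
    fix k assume kN: "k \<in> {1..n}"
    have jnot: "j \<notin> {j0. (j0,k) \<in> U}" using inv_U[OF inv, of j k] yj unfolding bef_def by auto
    have setU: "{j0. (j0,k) \<in> U'} = (if j<k \<and> 0<y k then insert j {j0. (j0,k) \<in> U} else {j0. (j0,k) \<in> U})"
      using kN unfolding U'_def by auto
    have cU: "cnt U' D k = cnt U D k + (if j<k \<and> 0<y k then 1 else 0)"
      using jnot fin_U[OF inv, of k] unfolding cnt_def setU by auto
    have old: "(if 0 \<le> y k then y k + cnt U D k else cnt U D k) = X k - 1" using inv_cnt[OF inv kN] .
    show "(if 0 \<le> y' k then y' k + cnt U' D k else cnt U' D k) = X k - 1"
    proof (cases "k = j")
      case True then show ?thesis using old cU yj y'_j by simp
    next
      case False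
      then show ?thesis using old cU kN unfolding y'_def by auto
    qed
  qed
  have h7: "\<forall>k j k'. (k,j)\<in>D \<longrightarrow> k'\<in>{1..n} \<longrightarrow> k'<j \<longrightarrow> (k',j)\<in>D \<or> bef y' k' k"
  proof (intro allI impI)
    fix k j0 k' assume "(k,j0)\<in>D" "k'\<in>{1..n}" "k'<j0"
    then show "(k',j0)\<in>D \<or> bef y' k' k"
      using inv_J1[OF inv] inv_D[OF inv] bef_pres by blast
  qed
  have h8: "\<forall>k j j'. (k,j)\<in>D \<longrightarrow> j'\<in>{1..n} \<longrightarrow> y' j' < y' j \<longrightarrow> k<j' \<longrightarrow> (k,j')\<in>D"
  proof (intro allI impI)
    fix k j0 j' assume kj: "(k,j0)\<in>D" and j': "j'\<in>{1..n}" and lt: "y' j' < y' j0" and kl: "k<j'"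
    have j0N: "j0 \<in> {1..n}" and yj0: "y j0 < 0" using inv_D[OF inv kj] unfolding bef_def by auto
    have v0: "y' j0 = y j0 - 1" using neg_val[OF j0N yj0] .
    have jj: "j' \<noteq> j" using lt v0 yj0 y'_j by auto
    have "y' j' < 0" using lt v0 yj0 by simp
    then have yj': "y j' < 0" using neg_iff[OF j' jj] by simp
    then have "y j' < y j0" using neg_val[OF j' yj'] v0 lt by simp
    then show "(k,j')\<in>D" using inv_J2[OF inv kj j' _ kl] by simp
  qed
  show ?thesis unfolding y'_def[symmetric] U'_def[symmetric] ainv_def
    by (intro conjI h1 h2 h3 h4 h5 h6 h7 h8)
qed




lemma down_pres:
  assumes inv: "ainv n X y U D" and pf: "PF n X"
    and nz: "\<not> (\<exists>k\<in>{1..n}. y k = 0)" and ex: "\<exists>k\<in>{1..n}. 0 < y k"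
    and jc: "j \<in> down_cands n y D" and jmin: "\<forall>j'\<in>down_cands n y D. y j \<le> y j'"
  shows "ainv n X (\<lambda>k. if 1 \<le> k \<and> k < j \<and> 0 < y k then y k - 1 else y k) U
     (D \<union> {(k, j) | k. 1 \<le> k \<and> k < j \<and> 0 < y k})"
    (is "ainv n X ?y' U ?D'")
proof -
  define y' where "y' = ?y'"
  define D' where "D' = ?D'"
  obtain j1 where "j1 \<in> down_cands n y D" "y j1 < 0" using key_neg[OF inv pf nz ex] by blast
  then have yjneg: "y j < 0" using jmin by force
  have jN: "j \<in> {1..n}" using jc unfolding down_cands_def by simp
  obtain k0 where k0: "1 \<le> k0" "k0 < j" "0 < y k0" "(k0,j) \<notin> D" using jc unfolding down_cands_def by blast
  have y'neg: "y' a < 0 \<longleftrightarrow> y a < 0" for a unfolding y'_def by auto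
  have y'negval: "y' a = y a" if "y a < 0" for a using that unfolding y'_def by auto
  have y'nn: "0 \<le> y' a" if "0 \<le> y a" for a using that unfolding y'_def by auto
  have bef_eq: "bef y' a b \<longleftrightarrow> bef y a b" for a b
  proof
    assume h: "bef y' a b"
    then have ya: "y a < 0" using y'neg unfolding bef_def by simp
    show "bef y a b"
    proof (cases "0 \<le> y b")
      case True then show ?thesis using ya unfolding bef_def by simp
    next
      case False then show ?thesis using h ya y'negval[of a] y'negval[of b] unfolding bef_def by simp
    qed
  next
    assume h: "bef y a b"
    then have ya: "y a < 0" unfolding bef_def by simp
    show "bef y' a b"
    proof (cases "0 \<le> y b")
      case True then show ?thesis using ya y'nn[OF True] y'neg unfolding bef_def by simp
    next
      case False then show ?thesis using h ya y'negval[of a] y'negval[of b] unfolding bef_def by simp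
    qed
  qed
  have y'_j: "y' j = y j" using y'negval yjneg by simp
  have h1: "\<forall>v. v \<notin> {1..n} \<longrightarrow> y' v = -1"
  proof (intro allI impI)
    fix v assume v: "v \<notin> {1..n}"
    then have "\<not> (1 \<le> v \<and> v < j \<and> 0 < y v)" using jN by auto
    then show "y' v = -1" using inv_out[OF inv v] unfolding y'_def by simp
  qed
  have h2: "\<forall>a\<in>{1..n}. \<forall>b\<in>{1..n}. y' a < 0 \<longrightarrow> y' a = y' b \<longrightarrow> a = b"
  proof (intro ballI impI)
    fix a b assume a: "a\<in>{1..n}" and b: "b\<in>{1..n}" and n1: "y' a < 0" and e: "y' a = y' b"
    have ya: "y a < 0" using n1 y'neg by simp
    have yb: "y b < 0" using n1 e y'neg by simp
    have "y a = y b" using e y'negval[OF ya] y'negval[OF yb] by simp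
    then show "a = b" using inv_dist[OF inv a b ya] by blast
  qed
  have h3: "\<forall>a b. (a,b)\<in>U \<longrightarrow> a<b \<and> a\<in>{1..n} \<and> b\<in>{1..n} \<and> bef y' a b"
    using inv_U[OF inv] bef_eq by blast
  have h4: "\<forall>k j. (k,j)\<in>D' \<longrightarrow> k<j \<and> k\<in>{1..n} \<and> j\<in>{1..n} \<and> bef y' j k"
  proof (intro allI impI)
    fix k j0 assume "(k,j0) \<in> D'"
    then consider "(k,j0) \<in> D" | "j0 = j" "1 \<le> k" "k < j" "0 < y k" unfolding D'_def by blast
    then show "k<j0 \<and> k\<in>{1..n} \<and> j0\<in>{1..n} \<and> bef y' j0 k"
    proof cases
      case 1 then show ?thesis using inv_D[OF inv] bef_eq by blast
    next
      case 2
      have "0 \<le> y' k" using y'nn 2 by simp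
      then show ?thesis using 2 jN y'_j yjneg unfolding bef_def by auto
    qed
  qed
  have h5: "\<forall>a\<in>{1..n}. \<forall>b\<in>{1..n}. a<b \<longrightarrow> bef y' a b \<longrightarrow> (a,b)\<in>U"
    using inv_I5[OF inv] bef_eq by blast
  have h6: "\<forall>k\<in>{1..n}. (if 0 \<le> y' k then y' k + cnt U D' k else cnt U D' k) = X k - 1"
  proof
    fix k assume kN: "k \<in> {1..n}"
    have jnot: "j \<notin> {j0. (k,j0) \<in> D}" if "0 < y k" "k < j"
    proof
      assume "j \<in> {j0. (k,j0) \<in> D}"
      then have "(k0,j) \<in> D \<or> bef y k0 k" using inv_J1[OF inv, of k j k0] k0 jN by auto
      then show False using k0 unfolding bef_def by auto
    qed
    have setD: "{j0. (k,j0) \<in> D'} = (if 1 \<le> k \<and> k<j \<and> 0<y k then insert j {j0. (k,j0) \<in> D} else {j0. (k,j0) \<in> D})"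
      unfolding D'_def by auto
    have cD: "cnt U D' k = cnt U D k + (if 1 \<le> k \<and> k<j \<and> 0<y k then 1 else 0)"
      using jnot fin_D[OF inv, of k] unfolding cnt_def setD by auto
    have old: "(if 0 \<le> y k then y k + cnt U D k else cnt U D k) = X k - 1" using inv_cnt[OF inv kN] .
    show "(if 0 \<le> y' k then y' k + cnt U D' k else cnt U D' k) = X k - 1"
    proof (cases "1 \<le> k \<and> k<j \<and> 0<y k")
      case True
      then have "y' k = y k - 1" unfolding y'_def by simp
      then show ?thesis using old cD True by simp
    next
      case False
      then have "y' k = y k" unfolding y'_def by simp
      moreover have "cnt U D' k = cnt U D k" using cD False by presburger
      ultimately show ?thesis using old by (auto split: if_split_asm)
    qed
  qed
  have h7: "\<forall>k j. \<forall>k'. (k,j)\<in>D' \<longrightarrow> k'\<in>{1..n} \<longrightarrow> k'<j \<longrightarrow> (k',j)\<in>D' \<or> bef y' k' k"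
  proof (intro allI impI)
    fix k j0 k' assume kj: "(k,j0)\<in>D'" and k': "k'\<in>{1..n}" and kl: "k'<j0"
    from kj consider "(k,j0) \<in> D" | "j0 = j" "1 \<le> k" "k < j" "0 < y k" unfolding D'_def by blast
    then show "(k',j0)\<in>D' \<or> bef y' k' k"
    proof cases
      case 1 then show ?thesis using inv_J1[OF inv 1 k' kl] bef_eq unfolding D'_def by blast
    next
      case 2
      show ?thesis
      proof (cases "0 < y k'")
        case True then show ?thesis using 2 k' kl unfolding D'_def by auto
      next
        case False
        then have "y k' < 0" using nz k' by force
        then show ?thesis using y'negval[of k'] y'nn[of k] 2 unfolding bef_def by simp
      qed
    qed
  qed
  have h8: "\<forall>k j j'. (k,j)\<in>D' \<longrightarrow> j'\<in>{1..n} \<longrightarrow> y' j' < y' j \<longrightarrow> k<j' \<longrightarrow> (k,j')\<in>D'"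
  proof (intro allI impI)
    fix k j0 j' assume kj: "(k,j0)\<in>D'" and j': "j'\<in>{1..n}" and lt: "y' j' < y' j0" and kl: "k<j'"
    from kj consider "(k,j0) \<in> D" | "j0 = j" "1 \<le> k" "k < j" "0 < y k" unfolding D'_def by blast
    then show "(k,j')\<in>D'"
    proof cases
      case 1
      have yj0: "y j0 < 0" using inv_D[OF inv 1] unfolding bef_def by simp
      have "y' j' < 0" using lt y'negval[OF yj0] yj0 by simp
      then have yj': "y j' < 0" using y'neg by simp
      have "y j' < y j0" using lt y'negval[OF yj0] y'negval[OF yj'] by simp
      then show ?thesis using inv_J2[OF inv 1 j' _ kl] unfolding D'_def by blast
    next
      case 2
      have "y' j' < 0" using lt y'_j 2 yjneg by simp
      then have yj': "y j' < 0" using y'neg by simp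
      have lt2: "y j' < y j" using lt y'_j y'negval[OF yj'] 2 by simp
      show ?thesis
      proof (rule ccontr)
        assume "(k,j') \<notin> D'"
        then have "(k,j') \<notin> D" unfolding D'_def by simp
        then have "j' \<in> down_cands n y D" using j' 2 kl unfolding down_cands_def by auto
        then show False using jmin lt2 by force
      qed
    qed
  qed
  show ?thesis unfolding y'_def[symmetric] D'_def[symmetric] ainv_def
    by (intro conjI h1 h2 h3 h4 h5 h6 h7 h8)
qed




lemma step_pres:
  assumes st: "algA_step n (y,U,D) (y',U',D')" and inv: "ainv n X y U D" and pf: "PF n X"
  shows "ainv n X y' U' D'"
  using st
proof cases
  case (up_step j)
  then show ?thesis using up_pres[OF inv] by simp
next
  case (down_step j)
  then show ?thesis using down_pres[OF inv pf] by simp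
qed

lemma reach_pres:
  assumes "(algA_step n)\<^sup>*\<^sup>* s0 s" and "case s0 of (y,U,D) \<Rightarrow> ainv n X y U D" and pf: "PF n X"
  shows "case s of (y,U,D) \<Rightarrow> ainv n X y U D"
  using assms(1,2)
proof (induction rule: rtranclp_induct)
  case base then show ?case by simp
next
  case (step s1 s2)
  obtain y U D where s1: "s1 = (y,U,D)" by (cases s1) auto
  obtain y' U' D' where s2: "s2 = (y',U',D')" by (cases s2) auto
  show ?case using step s1 s2 step_pres[OF _ _ pf] by auto
qed

definition mu :: "nat \<Rightarrow> (nat \<Rightarrow> int) \<Rightarrow> nat" where
  "mu n y = (\<Sum>v\<in>{1..n}. nat (y v + 1))"

lemma mu_up:
  assumes jN: "j\<in>{1..n}" and yj: "y j = 0"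
  shows "mu n (\<lambda>k. if k = j then -1
             else if k \<in> {1..n} \<and> j < k \<and> 0 < y k then y k - 1
             else if k \<in> {1..n} \<and> y k < 0 then y k - 1
             else y k) < mu n y"
  unfolding mu_def
proof (rule sum_strict_mono_ex1)
  show "finite {1..n}" by simp
  show "\<forall>x\<in>{1..n}. nat ((if x = j then -1
             else if x \<in> {1..n} \<and> j < x \<and> 0 < y x then y x - 1
             else if x \<in> {1..n} \<and> y x < 0 then y x - 1
             else y x) + 1) \<le> nat (y x + 1)" by auto
  show "\<exists>a\<in>{1..n}. nat ((if a = j then -1
             else if a \<in> {1..n} \<and> j < a \<and> 0 < y a then y a - 1
             else if a \<in> {1..n} \<and> y a < 0 then y a - 1
             else y a) + 1) < nat (y a + 1)" using jN yj by (intro bexI[of _ j]) auto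
qed

lemma mu_down:
  assumes jc: "j \<in> down_cands n y D"
  shows "mu n (\<lambda>k. if 1 \<le> k \<and> k < j \<and> 0 < y k then y k - 1 else y k) < mu n y"
  unfolding mu_def
proof (rule sum_strict_mono_ex1)
  obtain k0 where k0: "1 \<le> k0" "k0 < j" "0 < y k0" "j \<in> {1..n}" using jc unfolding down_cands_def by blast
  show "finite {1..n}" by simp
  show "\<forall>x\<in>{1..n}. nat ((if 1 \<le> x \<and> x < j \<and> 0 < y x then y x - 1 else y x) + 1) \<le> nat (y x + 1)" by auto
  show "\<exists>a\<in>{1..n}. nat ((if 1 \<le> a \<and> a < j \<and> 0 < y a then y a - 1 else y a) + 1) < nat (y a + 1)"
    using k0 by (intro bexI[of _ k0]) auto
qed

lemma exists_run:
  assumes "ainv n X y U D" and pf: "PF n X"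
  shows "\<exists>y' U' D'. (algA_step n)\<^sup>*\<^sup>* (y,U,D) (y',U',D') \<and> (\<forall>k\<in>{1..n}. y' k < 0)"
  using assms(1)
proof (induction "mu n y" arbitrary: y U D rule: less_induct)
  case less
  note inv = less.prems
  show ?case
  proof (cases "\<forall>k\<in>{1..n}. y k < 0")
    case True then show ?thesis by blast
  next
    case False
    show ?thesis
    proof (cases "\<exists>k\<in>{1..n}. y k = 0")
      case True
      define Z where "Z = {k\<in>{1..n}. y k = 0}"
      have Zf: "finite Z" "Z \<noteq> {}" using True unfolding Z_def by auto
      define j where "j = Max Z"
      have jZ: "j \<in> Z" using Zf unfolding j_def by simp
      have jN: "j \<in> {1..n}" and yj: "y j = 0" using jZ unfolding Z_def by auto
      have jmax: "\<forall>k\<in>{1..n}. y k = 0 \<longrightarrow> k \<le> j" using Zf unfolding j_def Z_def by auto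
      define y' where "y' = (\<lambda>k. if k = j then -1
             else if k \<in> {1..n} \<and> j < k \<and> 0 < y k then y k - 1
             else if k \<in> {1..n} \<and> y k < 0 then y k - 1
             else y k)"
      define U' where "U' = U \<union> {(j, k) | k. j < k \<and> k \<le> n \<and> 0 < y k}"
      have st: "algA_step n (y,U,D) (y',U',D)" unfolding y'_def U'_def
        by (rule algA_step.up_step[OF jN yj jmax])
      have inv': "ainv n X y' U' D" unfolding y'_def U'_def by (rule up_pres[OF inv jN yj jmax])
      have "mu n y' < mu n y" unfolding y'_def by (rule mu_up[of j n y, OF jN yj])
      then obtain y2 U2 D2 where "(algA_step n)\<^sup>*\<^sup>* (y',U',D) (y2,U2,D2)" "\<forall>k\<in>{1..n}. y2 k < 0"
        using less.hyps inv' by blast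
      then show ?thesis using st by (meson converse_rtranclp_into_rtranclp)
    next
      case nz: False
      have ex: "\<exists>k\<in>{1..n}. 0 < y k" using nz False by force
      define C where "C = down_cands n y D"
      have Cf: "finite C" unfolding C_def down_cands_def by simp
      have Cne: "C \<noteq> {}" using key_neg[OF inv pf nz ex] unfolding C_def by blast
      obtain j where jC: "j \<in> C" and jy: "y j = Min (y ` C)" using Cf Cne
        by (metis (no_types, lifting) Min_in finite_imageI image_iff image_is_empty)
      have jmin: "\<forall>j'\<in>down_cands n y D. y j \<le> y j'" using jy Cf unfolding C_def by simp
      have jc: "j \<in> down_cands n y D" using jC unfolding C_def .
      define y' where "y' = (\<lambda>k. if 1 \<le> k \<and> k < j \<and> 0 < y k then y k - 1 else y k)"
      define D' where "D' = D \<union> {(k, j) | k. 1 \<le> k \<and> k < j \<and> 0 < y k}"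
      have st: "algA_step n (y,U,D) (y',U,D')" unfolding y'_def D'_def
        by (rule algA_step.down_step[OF nz ex jc jmin])
      have inv': "ainv n X y' U D'" unfolding y'_def D'_def by (rule down_pres[OF inv pf nz ex jc jmin])
      have "mu n y' < mu n y" unfolding y'_def by (rule mu_down[OF jc])
      then obtain y2 U2 D2 where "(algA_step n)\<^sup>*\<^sup>* (y',U,D') (y2,U2,D2)" "\<forall>k\<in>{1..n}. y2 k < 0"
        using less.hyps inv' by blast
      then show ?thesis using st by (meson converse_rtranclp_into_rtranclp)
    qed
  qed
qed




lemma acyclic_lt: "acyclic {(a,b). (f::nat \<Rightarrow> int) a < f b}"
proof -
  have t: "trans {(a,b). (f::nat \<Rightarrow> int) a < f b}" by (auto simp: trans_def)
  show ?thesis unfolding acyclic_def trancl_id[OF t] by simp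
qed

lemma final_props:
  assumes inv: "ainv n X y U D" and allneg: "\<forall>k\<in>{1..n}. y k < 0"
    and P: "P = \<lparr>up = U, down = D, downish = vpairs n - (U \<union> D)\<rparr>"
  shows "parking_graph n P \<and> (\<forall>i\<in>{1..n}. int (indeg P i) = X i - 1)"
proof -
  have befy: "bef y a b \<longleftrightarrow> y a < y b" if "a\<in>{1..n}" "b\<in>{1..n}" for a b
    using that allneg unfolding bef_def by force
  have Uv: "U \<subseteq> vpairs n" using inv_U[OF inv] unfolding vpairs_def by fastforce
  have Dv: "D \<subseteq> vpairs n" using inv_D[OF inv] unfolding vpairs_def by fastforce
  have UD: "U \<inter> D = {}"
  proof (rule ccontr)
    assume "U \<inter> D \<noteq> {}"
    then obtain a b where ab: "(a,b) \<in> U" "(a,b) \<in> D" by auto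
    have "y a < y b" using inv_U[OF inv ab(1)] befy by blast
    moreover have "y b < y a" using inv_D[OF inv ab(2)] befy by blast
    ultimately show False by simp
  qed
  have mg: "mixed_graph n P" unfolding mixed_graph_def P using Uv Dv UD by auto
  have vN: "a \<in> {1..n} \<and> b \<in> {1..n} \<and> a < b" if "(a,b) \<in> vpairs n" for a b
    using that unfolding vpairs_def by auto
  have arcs_lt: "a\<in>{1..n} \<and> b\<in>{1..n} \<and> y a < y b" if ab: "(a,b) \<in> arcs P" for a b
  proof -
    from ab consider "(a,b) \<in> U" | "(b,a) \<in> D" | "(b,a) \<in> vpairs n - (U \<union> D)"
      unfolding arcs_def P by auto
    then show ?thesis
    proof cases
      case 1 then show ?thesis using inv_U[OF inv 1] befy by blast
    next
      case 2 then show ?thesis using inv_D[OF inv 2] befy by blast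
    next
      case 3
      have bN: "b\<in>{1..n}" and aN: "a\<in>{1..n}" and ba: "b<a" using vN 3 by auto
      have "\<not> y b < y a"
      proof
        assume "y b < y a"
        then have "(b,a) \<in> U" using inv_I5[OF inv bN aN ba] befy[OF bN aN] by blast
        then show False using 3 by blast
      qed
      moreover have "y b \<noteq> y a" using inv_dist[OF inv bN aN] allneg bN ba by fastforce
      ultimately show ?thesis using aN bN by simp
    qed
  qed
  have ac: "acyclic (arcs P)"
    by (rule acyclic_subset[OF acyclic_lt[of y]]) (use arcs_lt in auto)
  have total: "(a,b) \<in> arcs P \<or> (b,a) \<in> arcs P" if "a\<in>{1..n}" "b\<in>{1..n}" "a \<noteq> b" for a b
  proof -
    have "(min a b, max a b) \<in> vpairs n" using that unfolding vpairs_def by (auto simp: min_def max_def)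
    then have "(min a b, max a b) \<in> U \<or> (min a b, max a b) \<in> D \<or> (min a b, max a b) \<in> vpairs n - (U \<union> D)"
      by blast
    then show ?thesis unfolding arcs_def P using that
      by (cases "a < b") (auto simp: min_def max_def)
  qed
  have tri: "\<forall>s t m. s \<in> {1..n} \<and> t \<in> {1..n} \<and> m \<in> {1..n} \<and> distinct [s, t, m] \<and>
        (is_down P s t \<or> is_down P t m \<or> is_down P s m) \<and>
        (is_downish P s t \<or> is_downish P t m \<or> is_downish P s m) \<and>
        (t, s) \<notin> arcs P \<and> (m, s) \<notin> arcs P \<and> (t, m) \<notin> arcs P
        \<longrightarrow> \<not> is_downish P s t"
  proof (intro allI impI)
    fix s t m
    assume H: "s \<in> {1..n} \<and> t \<in> {1..n} \<and> m \<in> {1..n} \<and> distinct [s, t, m] \<and>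
        (is_down P s t \<or> is_down P t m \<or> is_down P s m) \<and>
        (is_downish P s t \<or> is_downish P t m \<or> is_downish P s m) \<and>
        (t, s) \<notin> arcs P \<and> (m, s) \<notin> arcs P \<and> (t, m) \<notin> arcs P"
    have sN: "s \<in> {1..n}" and tN: "t \<in> {1..n}" and mN: "m \<in> {1..n}"
      and d: "s \<noteq> t" "t \<noteq> m" "s \<noteq> m" using H by auto
    have st: "y s < y t" using total[OF sN tN d(1)] H arcs_lt by blast
    have sm: "y s < y m" using total[OF sN mN d(3)] H arcs_lt by blast
    have mt: "y m < y t" using total[OF mN tN d(2)[symmetric]] H arcs_lt by blast
    show "\<not> is_downish P s t"
    proof
      assume ds: "is_downish P s t"
      have ts: "t < s"
      proof (rule ccontr)
        assume "\<not> t < s"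
        then have "s < t" using d by simp
        then have "(s,t) \<in> U" using inv_I5[OF inv sN tN] befy[OF sN tN] st by blast
        moreover have "(s,t) \<in> vpairs n - (U \<union> D)" using ds \<open>s < t\<close> unfolding is_downish_def P by simp
        ultimately show False by blast
      qed
      have tsD: "(t,s) \<notin> D" using ds ts unfolding is_downish_def P by simp
      from H have "is_down P s t \<or> is_down P t m \<or> is_down P s m" by blast
      then show False
      proof (elim disjE)
        assume "is_down P s t" then show False using tsD ts unfolding is_down_def P by simp
      next
        assume h: "is_down P t m"
        show False
        proof (cases "m < t")
          case True
          then have "(m,t) \<in> D" using h unfolding is_down_def P by simp
          then have "y t < y m" using inv_D[OF inv] befy by blast
          then show False using mt by simp
        next
          case False
          then have "t < m" using d by simp
          then have "(t,m) \<in> D" using h unfolding is_down_def P by simp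
          then have "(t,s) \<in> D" using inv_J2[OF inv _ sN sm ts] by blast
          then show False using tsD by simp
        qed
      next
        assume h: "is_down P s m"
        show False
        proof (cases "s < m")
          case True
          then have "(s,m) \<in> D" using h unfolding is_down_def P by simp
          then have "y m < y s" using inv_D[OF inv] befy by blast
          then show False using sm by simp
        next
          case False
          then have "m < s" using d by simp
          then have "(m,s) \<in> D" using h unfolding is_down_def P by simp
          then have "(t,s) \<in> D \<or> bef y t m" using inv_J1[OF inv _ tN ts] by blast
          then show False using tsD befy[OF tN mN] mt by simp
        qed
      qed
    qed
  qed
  have pg: "parking_graph n P" unfolding parking_graph_def using mg ac tri by blast
  have ind: "\<forall>i\<in>{1..n}. int (indeg P i) = X i - 1"
  proof
    fix i assume iN: "i \<in> {1..n}"
    have "y i < 0" using allneg iN by blast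
    then have "cnt U D i = X i - 1" using inv_cnt[OF inv iN] by simp
    then show "int (indeg P i) = X i - 1" unfolding indeg_def cnt_def P by simp
  qed
  show ?thesis using pg ind by blast
qed

lemma pf_PF:
  assumes "parking_function x"
  shows "PF (length x) (\<lambda>k. int (x ! (k - 1)))"
  unfolding PF_def
proof (intro allI impI)
  fix m assume m: "m < length x"
  define s where "s = sort x"
  have ls: "length s = length x" unfolding s_def by simp
  have sm: "s ! m \<le> m + 1" using assms m unfolding parking_function_def s_def by simp
  have srt: "sorted s" unfolding s_def by simp
  have sub: "{0..m} \<subseteq> {i. i < length s \<and> s ! i \<le> m + 1}"
  proof
    fix i assume "i \<in> {0..m}"
    then have "i \<le> m" by simp
    then have "s ! i \<le> s ! m" using srt m ls by (simp add: sorted_nth_mono)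
    then show "i \<in> {i. i < length s \<and> s ! i \<le> m + 1}" using \<open>i \<le> m\<close> m ls sm by simp
  qed
  have "m + 1 \<le> card {i. i < length s \<and> s ! i \<le> m + 1}"
    using card_mono[OF _ sub] by simp
  also have "\<dots> = length (filter (\<lambda>v. v \<le> m + 1) s)" by (simp add: length_filter_conv_card)
  also have "\<dots> = length (filter (\<lambda>v. v \<le> m + 1) x)"
    unfolding s_def by (simp add: filter_sort)
  also have "\<dots> = card {i. i < length x \<and> x ! i \<le> m + 1}" by (simp add: length_filter_conv_card)
  also have "\<dots> = card (Suc ` {i. i < length x \<and> x ! i \<le> m + 1})" by (simp add: card_image)
  also have "Suc ` {i. i < length x \<and> x ! i \<le> m + 1} = {i\<in>{1..length x}. int (x ! (i - 1)) \<le> int (m+1)}"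
  proof (rule set_eqI, rule iffI)
    fix i assume "i \<in> Suc ` {i. i < length x \<and> x ! i \<le> m + 1}"
    then show "i \<in> {i\<in>{1..length x}. int (x ! (i - 1)) \<le> int (m+1)}" by auto
  next
    fix i assume i: "i \<in> {i\<in>{1..length x}. int (x ! (i - 1)) \<le> int (m+1)}"
    then have "i = Suc (i - 1)" by simp
    moreover have "i - 1 \<in> {i. i < length x \<and> x ! i \<le> m + 1}" using i by auto
    ultimately show "i \<in> Suc ` {i. i < length x \<and> x ! i \<le> m + 1}" by (metis image_eqI)
  qed
  finally show "m + 1 \<le> card {i\<in>{1..length x}. int (x ! (i - 1)) \<le> int (m+1)}" .
qed

theorem mainTheorem8:
  fixes x :: "nat list"
  assumes "parking_function x"
  shows "(\<exists>P. algA_output x P) \<and>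
         (\<forall>P. algA_output x P \<longrightarrow>
            parking_graph (length x) P \<and>
            (\<forall>i\<in>{1..length x}. indeg P i = x ! (i - 1) - 1))"
proof -
  define n where "n = length x"
  define X where "X = (\<lambda>k. int (x ! (k - 1)))"
  define y0 where "y0 = (\<lambda>k. if k \<in> {1..length x} then int (x ! (k - 1)) - 1 else -1)"
  have init: "algA_init x = (y0, {}, {})" unfolding algA_init_def y0_def by simp
  have pf: "PF n X" unfolding n_def X_def by (rule pf_PF[OF assms])
  have xpos: "1 \<le> x ! (k - 1)" if "k \<in> {1..n}" for k
  proof -
    have "k - 1 < length x" using that unfolding n_def by auto
    then have "x ! (k - 1) \<in> set x" by simp
    then show ?thesis using assms unfolding parking_function_def by blast
  qed
  have inv0: "ainv n X y0 {} {}"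
    unfolding ainv_def
  proof (intro conjI)
    show "\<forall>v. v \<notin> {1..n} \<longrightarrow> y0 v = -1" unfolding y0_def n_def by simp
    show "\<forall>a\<in>{1..n}. \<forall>b\<in>{1..n}. y0 a < 0 \<longrightarrow> y0 a = y0 b \<longrightarrow> a = b"
      using xpos unfolding y0_def n_def by force
    show "\<forall>a\<in>{1..n}. \<forall>b\<in>{1..n}. a<b \<longrightarrow> bef y0 a b \<longrightarrow> (a,b)\<in>{}"
      using xpos unfolding y0_def n_def bef_def by force
    show "\<forall>k\<in>{1..n}. (if 0 \<le> y0 k then y0 k + cnt {} {} k else cnt {} {} k) = X k - 1"
      using xpos unfolding y0_def n_def X_def cnt_def by force
  qed auto
  have ex: "\<exists>P. algA_output x P"
  proof -
    obtain y' U' D' where r: "(algA_step n)\<^sup>*\<^sup>* (y0,{},{}) (y',U',D')" "\<forall>k\<in>{1..n}. y' k < 0"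
      using exists_run[OF inv0 pf] by blast
    show ?thesis unfolding algA_output_def using r init unfolding n_def by metis
  qed
  have all: "parking_graph (length x) P \<and> (\<forall>i\<in>{1..length x}. indeg P i = x ! (i - 1) - 1)"
    if o: "algA_output x P" for P
  proof -
    obtain y U D where r: "(algA_step n)\<^sup>*\<^sup>* (algA_init x) (y, U, D)" and neg: "\<forall>k\<in>{1..n}. y k < 0"
      and P: "P = \<lparr>up = U, down = D, downish = vpairs n - (U \<union> D)\<rparr>"
      using o unfolding algA_output_def n_def by blast
    have "ainv n X y U D" using reach_pres[OF r[unfolded init], of X] inv0 pf by simp
    from final_props[OF this neg P]
    have fp: "parking_graph n P" "\<forall>i\<in>{1..n}. int (indeg P i) = X i - 1" by auto
    have "\<forall>i\<in>{1..n}. indeg P i = x ! (i - 1) - 1"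
    proof
      fix i assume iN: "i \<in> {1..n}"
      have "int (indeg P i) = int (x ! (i - 1)) - 1" using fp(2) iN unfolding X_def by simp
      then show "indeg P i = x ! (i - 1) - 1" using xpos[OF iN] by linarith
    qed
    then show ?thesis using fp(1) unfolding n_def by simp
  qed
  show ?thesis using ex all by blast
qed


end
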